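(* Let $X,Y$ be nonempty sets and let $F\colon X^*\to Y$ be a function such that $F_1$ is one-to-one. Consider: (i) $F$ is preassociative and unarily quasi-range-idempotent; (ii) there is a unique $\varepsilon$-standard operation $H\colon X^*\to X\cup\{\varepsilon\}$ such that $F^{\flat}=F_1\circ H^{\flat}$, namely $H^{\flat}=F_1^{-1}\circ F^{\flat}$, and this operation is associative and unarily idempotent. Then (i) implies (ii). If $F$ is standard, then (ii) implies (i).
   Context: $X^*=\bigcup_{n\geqslant 0}X^n$ is the set of finite tuples over $X$, $X^0=\{\varepsilon\}$ with $\varepsilon\notin X$ the empty tuple; $F(\mathbf{x},\mathbf{y})$ denotes $F$ applied to the concatenation, and concatenation with $\varepsilon$ leaves tuples unchanged. $F_n=F|_{X^n}$ ($X^1$ identified with $X$), $F^{\flat}=F|_{X^*\setminus\{\varepsilon\}}$. $F$ is standard if $F(\mathbf{x})=F(\varepsilon)$ only for $\mathbf{x}=\varepsilon$. $F$ is preassociative if for all $\mathbf{x},\mathbf{y},\mathbf{y}',\mathbf{z}\in X^*$, $F(\mathbf{y})=F(\mathbf{y}')$ implies $F(\mathbf{x},\mathbf{y},\mathbf{z})=F(\mathbf{x},\mathbf{y}',\mathbf{z})$. $F$ is unarily quasi-range-idempotent if $\mathrm{ran}(F_1)=\mathrm{ran}(F^{\flat})$. An operation $H\colon X^*\to X\cup\{\varepsilon\}$ is $\varepsilon$-standard if it is standard and $H(\varepsilon)=\varepsilon$; it is associative if $H(\mathbf{x},\mathbf{y},\mathbf{z})=H(\mathbf{x},H(\mathbf{y}),\mathbf{z})$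 for all $\mathbf{x},\mathbf{y},\mathbf{z}\in X^*$ (a value $\varepsilon$ treated as the empty tuple); it is unarily idempotent if $H_1$ is the identity of $X$. *)

theory Defs
  imports Main
begin

text \<open>An operation
  H : X^* -> X \<union> {\<epsilon>} is modelled as 'a list \<Rightarrow> 'a option, with None standing for \<epsilon>;
  a value of H is turned back into a tuple by opt_tuple.\<close>

definition standard :: "('a list \<Rightarrow> 'b) \<Rightarrow> bool" where
  "standard F \<longleftrightarrow> (\<forall>x. F x = F [] \<longrightarrow> x = [])"

definition preassociative :: "('a list \<Rightarrow> 'b) \<Rightarrow> bool" where
  "preassociative F \<longleftrightarrow>
     (\<forall>x y y' z. F y = F y' \<longrightarrow> F (x @ y @ z) = F (x @ y' @ z))"

definition unarily_quasi_range_idempotent :: "('a list \<Rightarrow> 'b) \<Rightarrow> bool" where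
  "unarily_quasi_range_idempotent F \<longleftrightarrow>
     range (\<lambda>a. F [a]) = F ` {x. x \<noteq> []}"

definition eps_standard :: "('a list \<Rightarrow> 'a option) \<Rightarrow> bool" where
  "eps_standard H \<longleftrightarrow> standard H \<and> H [] = None"

definition opt_tuple :: "'a option \<Rightarrow> 'a list" where
  "opt_tuple v = (case v of None \<Rightarrow> [] | Some a \<Rightarrow> [a])"

definition associative_op :: "('a list \<Rightarrow> 'a option) \<Rightarrow> bool" where
  "associative_op H \<longleftrightarrow>
     (\<forall>x y z. H (x @ y @ z) = H (x @ opt_tuple (H y) @ z))"

definition unarily_idempotent :: "('a list \<Rightarrow> 'a option) \<Rightarrow> bool" where
  "unarily_idempotent H \<longleftrightarrow> (\<forall>a. H [a] = Some a)"

text \<open>F^flat = F_1 \<circ> H^flat : for every nonempty tuple x, H x is an element a of X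
  (not \<epsilon>) and F x = F [a].\<close>
definition factors_through :: "('a list \<Rightarrow> 'b) \<Rightarrow> ('a list \<Rightarrow> 'a option) \<Rightarrow> bool" where
  "factors_through F H \<longleftrightarrow> (\<forall>x. x \<noteq> [] \<longrightarrow> (\<exists>a. H x = Some a \<and> F x = F [a]))"

end

theory Submission
  imports Defs
begin

lemma dir2:
  fixes F :: "'a list \<Rightarrow> 'b"
  assumes inj1: "inj (\<lambda>a. F [a])" and st: "standard F"
    and eh: "eps_standard H" and ft: "factors_through F H" and ass: "associative_op H"
  shows "preassociative F \<and> unarily_quasi_range_idempotent F"
proof
  have fH: "\<And>w. w \<noteq> [] \<Longrightarrow> \<exists>a. H w = Some a \<and> F w = F [a]" using ft unfolding factors_through_def by blast
  show "unarily_quasi_range_idempotent F"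
    unfolding unarily_quasi_range_idempotent_def
  proof
    show "range (\<lambda>a. F [a]) \<subseteq> F ` {x. x \<noteq> []}" by auto
    show "F ` {x. x \<noteq> []} \<subseteq> range (\<lambda>a. F [a])" using fH by fastforce
  qed
  show "preassociative F" unfolding preassociative_def
  proof (intro allI impI)
    fix x y y' z assume e: "F y = F y'"
    show "F (x @ y @ z) = F (x @ y' @ z)"
    proof (cases "y = [] \<or> y' = []")
      case True
      then have "y = y'" using e st unfolding standard_def by metis
      then show ?thesis by simp
    next
      case False
      then obtain a b where a: "H y = Some a" "F y = F [a]" and b: "H y' = Some b" "F y' = F [b]"
        using fH by blast
      have "a = b" using a b e inj1 by (metis (mono_tags, lifting) injD)
      then have hy: "H y = H y'" using a b by simp
      have "H (x @ y @ z) = H (x @ y' @ z)"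
        using ass hy unfolding associative_op_def by metis
      moreover obtain c where "H (x @ y @ z) = Some c" "F (x @ y @ z) = F [c]"
        using fH[of "x @ y @ z"] False by auto
      moreover obtain d where "H (x @ y' @ z) = Some d" "F (x @ y' @ z) = F [d]"
        using fH[of "x @ y' @ z"] False by auto
      ultimately show ?thesis by simp
    qed
  qed
qed

lemma dir1:
  fixes F :: "'a list \<Rightarrow> 'b"
  assumes inj1: "inj (\<lambda>a. F [a])" and pa: "preassociative F"
    and uq: "unarily_quasi_range_idempotent F"
  shows "(\<exists>!H. eps_standard H \<and> factors_through F H) \<and>
           (\<forall>H. eps_standard H \<and> factors_through F H \<longrightarrow>
              (\<forall>x. x \<noteq> [] \<longrightarrow> H x = Some (the_inv (\<lambda>a. F [a]) (F x))) \<and>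
              associative_op H \<and> unarily_idempotent H)"
proof -
  let ?g = "the_inv (\<lambda>a. F [a])"
  have inr: "\<And>x. x \<noteq> [] \<Longrightarrow> F [?g (F x)] = F x"
  proof -
    fix x :: "'a list" assume "x \<noteq> []"
    then have "F x \<in> range (\<lambda>a. F [a])" using uq unfolding unarily_quasi_range_idempotent_def by auto
    then obtain a where "F x = F [a]" by auto
    moreover have "?g (F [a]) = a" using the_inv_f_f[OF inj1] by simp
    ultimately show "F [?g (F x)] = F x" by simp
  qed
  have gi: "\<And>a. ?g (F [a]) = a" using the_inv_f_f[OF inj1] by simp
  have char: "\<And>(H :: 'a list \<Rightarrow> 'a option) x. factors_through F H \<Longrightarrow> x \<noteq> [] \<Longrightarrow> H x = Some (?g (F x))"
  proof -
    fix H :: "'a list \<Rightarrow> 'a option" and x :: "'a list"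
    assume "factors_through F H" "x \<noteq> []"
    then obtain a where "H x = Some a" "F x = F [a]" unfolding factors_through_def by blast
    then show "H x = Some (?g (F x))" using gi by simp
  qed
  define H0 where "H0 x = (if x = [] then None else Some (?g (F x)))" for x
  have e0: "eps_standard H0 \<and> factors_through F H0"
    unfolding eps_standard_def standard_def factors_through_def H0_def using inr by auto
  have uniq: "\<And>H. eps_standard H \<and> factors_through F H \<Longrightarrow> H = H0"
  proof
    fix H x assume h: "eps_standard H \<and> factors_through F H"
    show "H x = H0 x"
      using h char[of H x] unfolding H0_def eps_standard_def by auto
  qed
  have props: "associative_op H \<and> unarily_idempotent H" if h: "eps_standard H \<and> factors_through F H" for H
  proof -
    have HH: "H = H0" using uniq h by blast
    have "associative_op H0" unfolding associative_op_def
    proof (intro allI)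
      fix x y z
      show "H0 (x @ y @ z) = H0 (x @ opt_tuple (H0 y) @ z)"
      proof (cases "y = []")
        case True then show ?thesis by (simp add: H0_def opt_tuple_def)
      next
        case False
        have "F [?g (F y)] = F y" using inr False by simp
        then have "F (x @ y @ z) = F (x @ [?g (F y)] @ z)" using pa unfolding preassociative_def by metis
        then show ?thesis using False by (simp add: H0_def opt_tuple_def)
      qed
    qed
    moreover have "unarily_idempotent H0" unfolding unarily_idempotent_def H0_def using gi by simp
    ultimately show ?thesis using HH by simp
  qed
  show ?thesis using e0 uniq props char by blast
qed

theorem corollary4p5:
  fixes F :: "'a list \<Rightarrow> 'b"
  assumes inj1: "inj (\<lambda>a. F [a])"
  shows "(preassociative F \<and> unarily_quasi_range_idempotent F \<longrightarrow>
           (\<exists>!H. eps_standard H \<and> factors_through F H) \<and>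
           (\<forall>H. eps_standard H \<and> factors_through F H \<longrightarrow>
              (\<forall>x. x \<noteq> [] \<longrightarrow> H x = Some (the_inv (\<lambda>a. F [a]) (F x))) \<and>
              associative_op H \<and> unarily_idempotent H))
       \<and> (standard F \<longrightarrow>
           ((\<exists>!H. eps_standard H \<and> factors_through F H) \<and>
            (\<forall>H. eps_standard H \<and> factors_through F H \<longrightarrow>
              (\<forall>x. x \<noteq> [] \<longrightarrow> H x = Some (the_inv (\<lambda>a. F [a]) (F x))) \<and>
              associative_op H \<and> unarily_idempotent H))
           \<longrightarrow> preassociative F \<and> unarily_quasi_range_idempotent F)"
proof (rule conjI; intro impI)
  assume "preassociative F \<and> unarily_quasi_range_idempotent F"
  then show "(\<exists>!H. eps_standard H \<and> factors_through F H) \<and>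
           (\<forall>H. eps_standard H \<and> factors_through F H \<longrightarrow>
              (\<forall>x. x \<noteq> [] \<longrightarrow> H x = Some (the_inv (\<lambda>a. F [a]) (F x))) \<and>
              associative_op H \<and> unarily_idempotent H)"
    using dir1[OF inj1] by blast
next
  assume st: "standard F" and ii: "(\<exists>!H. eps_standard H \<and> factors_through F H) \<and>
            (\<forall>H. eps_standard H \<and> factors_through F H \<longrightarrow>
              (\<forall>x. x \<noteq> [] \<longrightarrow> H x = Some (the_inv (\<lambda>a. F [a]) (F x))) \<and>
              associative_op H \<and> unarily_idempotent H)"
  then obtain H where "eps_standard H" "factors_through F H" "associative_op H" by blast
  then show "preassociative F \<and> unarily_quasi_range_idempotent F"
    using dir2[OF inj1 st] by blast
qed

end
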